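(* Let $X$ be a nonempty countable set, $\mathcal D$ a distribution on $X$, $\rho$ a cost function on $X$ of finite degree $d\ge1$, $m\ge1$, and $\mu\in\mathscr D^{m,\rho,\mathcal D}_{\mathrm{adaptive}}$. Let $S'\sim\mu$ and let $r$ be an integer with $0\le r<m$. Then $$\mathbb E_{i,B}\big[I(S'_i;S'_B)\big]\le\frac{m}{m-r}\ln d,$$ where $i$ is uniform on $[m]$ and $B$ is a uniformly random $r$-element subset of $[m]\setminus\{i\}$.
   Context: A cost function on $X$ is $\rho:X\times X\to\mathbb R_{\ge0}\cup\{\infty\}$ with $\rho(x,x)=0$; its degree is $\sup_x\#\{y:\rho(x,y)\ne\infty\}$. For $S\in X^m$, $\mathcal C_\rho(S)=\{S'\in X^m:\frac1m\sum_i\rho(S_i,S'_i)\le1\}$. $\mathscr D^{m,\rho,\mathcal D}_{\mathrm{adaptive}}$ is the set of distributions $\mu$ on $X^m$ for which there is a coupling of $S'\sim\mu$ and $S\sim\mathcal D^m$ with $S'\in\mathcal C_\rho(S)$ almost surely. $S'_B=(S'_b)_{b\in B}$; $I$ is mutual information in nats. *)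

theory Defs
  imports "HOL-Probability.Probability"
begin

definition cost_function :: "('a \<Rightarrow> 'a \<Rightarrow> ennreal) \<Rightarrow> bool" where
  "cost_function \<rho> \<longleftrightarrow> (\<forall>x. \<rho> x x = 0)"

definition cost_degree :: "('a \<Rightarrow> 'a \<Rightarrow> ennreal) \<Rightarrow> enat" where
  "cost_degree \<rho> = (SUP x. if finite {y. \<rho> x y \<noteq> \<top>} then enat (card {y. \<rho> x y \<noteq> \<top>}) else \<infinity>)"

definition cost_ball :: "('a \<Rightarrow> 'a \<Rightarrow> ennreal) \<Rightarrow> nat \<Rightarrow> 'a list \<Rightarrow> 'a list set" where
  "cost_ball \<rho> m S = {S'. length S' = m \<and>
      (1 / of_nat m) * (\<Sum>i<m. \<rho> (S ! i) (S' ! i)) \<le> (1::ennreal)}"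

definition adaptive_class :: "nat \<Rightarrow> ('a \<Rightarrow> 'a \<Rightarrow> ennreal) \<Rightarrow> 'a pmf \<Rightarrow> 'a list pmf set" where
  "adaptive_class m \<rho> D = {\<mu>. set_pmf \<mu> \<subseteq> {xs. length xs = m} \<and>
      (\<exists>c :: ('a list \<times> 'a list) pmf.
          map_pmf fst c = \<mu> \<and> map_pmf snd c = replicate_pmf m D \<and>
          (\<forall>(S', S) \<in> set_pmf c. S' \<in> cost_ball \<rho> m S))}"

text \<open>Mutual information (in nats) of the two components of a discrete joint distribution p,
  with values in [0,\<infinity>]:
  I = sum over (x,y) of  q ln (q / (a b)) - q + a b,  where q = p(x,y), a = p(x), b = p(y).
  Since the q and the a b both sum to 1, this equals the usual sum of q ln(q/(a b)); the
  rewriting makes every summand nonnegative so the (possibly infinite) sum is well defined.\<close>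

definition kl_term :: "real \<Rightarrow> real \<Rightarrow> real" where
  "kl_term q t = (if q = 0 then t else q * ln (q / t) - q + t)"

definition mutual_info_pmf :: "('a \<times> 'b) pmf \<Rightarrow> ennreal" where
  "mutual_info_pmf p =
     (\<integral>\<^sup>+ z. ennreal (kl_term (pmf p z)
                 (pmf (map_pmf fst p) (fst z) * pmf (map_pmf snd p) (snd z))) \<partial>count_space UNIV)"

definition MI_coord_block :: "'a list pmf \<Rightarrow> nat \<Rightarrow> nat set \<Rightarrow> ennreal" where
  "MI_coord_block \<mu> i B =
     mutual_info_pmf (map_pmf (\<lambda>S. (S ! i, map (\<lambda>b. S ! b) (sorted_list_of_set B))) \<mu>)"

end

theory Submission
  imports Defs
begin


locale fdist =
  fixes S :: "'w set" and p :: "'w \<Rightarrow> real"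
  assumes fin: "finite S" and pos: "\<And>w. w \<in> S \<Longrightarrow> p w > 0" and tot: "sum p S = 1"
begin

definition Pr :: "('w \<Rightarrow> 'v) \<Rightarrow> 'w \<Rightarrow> real" where
  "Pr f w = sum p {w'\<in>S. f w' = f w}"

definition H :: "('w \<Rightarrow> 'v) \<Rightarrow> real" where
  "H f = (\<Sum>w\<in>S. p w * - ln (Pr f w))"

lemma p_nonneg: "w \<in> S \<Longrightarrow> p w \<ge> 0" using pos[of w] by simp

lemma Pr_pos: "w \<in> S \<Longrightarrow> Pr f w > 0"
  unfolding Pr_def
  by (rule sum_pos2[of _ w]) (use fin pos in \<open>auto intro: less_imp_le\<close>)

lemma Pr_le1: "Pr f w \<le> 1"
proof -
  have "Pr f w \<le> sum p S" unfolding Pr_def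
    by (rule sum_mono2) (use fin p_nonneg in auto)
  thus ?thesis using tot by simp
qed

lemma Pr_mono:
  assumes "w \<in> S" "\<And>w'. w' \<in> S \<Longrightarrow> g w' = g w \<Longrightarrow> f w' = f w"
  shows "Pr g w \<le> Pr f w"
  unfolding Pr_def
proof (rule sum_mono2)
  show "finite {w' \<in> S. f w' = f w}" using fin by simp
  show "{w' \<in> S. g w' = g w} \<subseteq> {w' \<in> S. f w' = f w}" using assms(2) by blast
  show "\<And>b. b \<in> {w' \<in> S. f w' = f w} - {w' \<in> S. g w' = g w} \<Longrightarrow> 0 \<le> p b"
    using p_nonneg by blast
qed

lemma Pr_cong:
  assumes "\<And>w'. w' \<in> S \<Longrightarrow> g w' = g w \<longleftrightarrow> f w' = f w"
  shows "Pr g w = Pr f w"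
proof -
  have "{w'\<in>S. g w' = g w} = {w'\<in>S. f w' = f w}" using assms by auto
  thus ?thesis unfolding Pr_def by simp
qed

lemma H_mono:
  assumes "\<And>w w'. w \<in> S \<Longrightarrow> w' \<in> S \<Longrightarrow> g w' = g w \<Longrightarrow> f w' = f w"
  shows "H f \<le> H g"
  unfolding H_def
proof (rule sum_mono)
  fix w assume w: "w \<in> S"
  have "Pr g w \<le> Pr f w" using Pr_mono[OF w] assms w by blast
  hence "ln (Pr g w) \<le> ln (Pr f w)" using Pr_pos[OF w, of g] Pr_pos[OF w, of f] by simp
  thus "p w * - ln (Pr f w) \<le> p w * - ln (Pr g w)"
    using p_nonneg[OF w] by (intro mult_left_mono) auto
qed

lemma H_cong:
  assumes "\<And>w w'. w \<in> S \<Longrightarrow> w' \<in> S \<Longrightarrow> g w' = g w \<longleftrightarrow> f w' = f w"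
  shows "H f = H g"
proof (rule antisym)
  show "H f \<le> H g" by (rule H_mono) (use assms in blast)
  show "H g \<le> H f" by (rule H_mono) (use assms in blast)
qed

lemma H_nonneg: "H f \<ge> 0"
  unfolding H_def
proof (rule sum_nonneg)
  fix w assume w: "w \<in> S"
  have "ln (Pr f w) \<le> 0" using Pr_pos[OF w, of f] Pr_le1[of f w] by simp
  thus "0 \<le> p w * - ln (Pr f w)" using p_nonneg[OF w] by (simp add: mult_nonneg_nonpos)
qed

lemma H_const: "H (\<lambda>_. c) = 0"
  unfolding H_def Pr_def using tot by simp

lemma regroup:
  "(\<Sum>w\<in>S. p w * G (h w)) = (\<Sum>v\<in>h ` S. sum p {w\<in>S. h w = v} * G v)"
proof -
  have "(\<Sum>w\<in>S. p w * G (h w)) = (\<Sum>v\<in>h ` S. \<Sum>w\<in>{w\<in>S. h w = v}. p w * G (h w))"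
    by (rule sum.image_gen[OF fin])
  also have "\<dots> = (\<Sum>v\<in>h ` S. sum p {w\<in>S. h w = v} * G v)"
    by (rule sum.cong[OF refl]) (simp add: sum_distrib_right)
  finally show ?thesis .
qed

lemma gibbs:
  fixes h :: "'w \<Rightarrow> 'v" and Q :: "'v \<Rightarrow> real"
  assumes Qpos: "\<And>w. w \<in> S \<Longrightarrow> Q (h w) > 0" and Qsum: "sum Q (h ` S) \<le> 1"
  shows "(\<Sum>w\<in>S. p w * ln (Q (h w) / Pr h w)) \<le> 0"
proof -
  have "(\<Sum>w\<in>S. p w * ln (Q (h w) / Pr h w)) \<le> (\<Sum>w\<in>S. p w * (Q (h w) / Pr h w - 1))"
  proof (rule sum_mono)
    fix w assume w: "w \<in> S"
    have "ln (Q (h w) / Pr h w) \<le> Q (h w) / Pr h w - 1"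
      by (rule ln_le_minus_one) (use Qpos[OF w] Pr_pos[OF w, of h] in simp)
    thus "p w * ln (Q (h w) / Pr h w) \<le> p w * (Q (h w) / Pr h w - 1)"
      using p_nonneg[OF w] by (intro mult_left_mono) auto
  qed
  also have "\<dots> = (\<Sum>w\<in>S. p w * (Q (h w) / Pr h w)) - (\<Sum>w\<in>S. p w)"
    unfolding right_diff_distrib mult_1_right by (rule sum_subtractf)
  also have "\<dots> = (\<Sum>w\<in>S. p w * (Q (h w) / sum p {w'\<in>S. h w' = h w})) - 1"
    unfolding tot Pr_def by (rule refl)
  also have "(\<Sum>w\<in>S. p w * (Q (h w) / sum p {w'\<in>S. h w' = h w}))
     = (\<Sum>v\<in>h ` S. sum p {w\<in>S. h w = v} * (Q v / sum p {w'\<in>S. h w' = v}))"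
    by (rule regroup[where G = "\<lambda>v. Q v / sum p {w'\<in>S. h w' = v}"])
  also have "\<dots> = sum Q (h ` S)"
  proof (rule sum.cong[OF refl])
    fix v assume "v \<in> h ` S"
    then obtain w where w: "w \<in> S" "h w = v" by auto
    have "sum p {w\<in>S. h w = v} > 0" using Pr_pos[OF w(1), of h] w unfolding Pr_def by simp
    thus "sum p {w\<in>S. h w = v} * (Q v / sum p {w'\<in>S. h w' = v}) = Q v" by simp
  qed
  finally show ?thesis using Qsum by linarith
qed


lemma sum_p_group:
  assumes "f ` T \<subseteq> A" "finite A" "T \<subseteq> S"
  shows "(\<Sum>a\<in>A. sum p {w\<in>T. f w = a}) = sum p T"
  by (rule sum.group) (use assms fin finite_subset in auto)

lemma submod:
  "H (\<lambda>w. (f w, g w, k w)) + H k \<le> H (\<lambda>w. (f w, k w)) + H (\<lambda>w. (g w, k w))"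
proof -
  define Pfk where "Pfk a e = sum p {w\<in>S. f w = a \<and> k w = e}" for a e
  define Pgk where "Pgk b e = sum p {w\<in>S. g w = b \<and> k w = e}" for b e
  define Pk where "Pk e = sum p {w\<in>S. k w = e}" for e
  define Q where "Q = (\<lambda>(a,b,e). Pfk a e * Pgk b e / Pk e)"
  define h where "h = (\<lambda>w. (f w, g w, k w))"
  have PfkPr: "Pfk (f w) (k w) = Pr (\<lambda>w. (f w, k w)) w" for w
    unfolding Pfk_def Pr_def by simp
  have PgkPr: "Pgk (g w) (k w) = Pr (\<lambda>w. (g w, k w)) w" for w
    unfolding Pgk_def Pr_def by simp
  have PkPr: "Pk (k w) = Pr k w" for w
    unfolding Pk_def Pr_def by simp
  have Qh: "Q (h w) = Pr (\<lambda>w. (f w, k w)) w * Pr (\<lambda>w. (g w, k w)) w / Pr k w" for w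
    unfolding Q_def h_def by (simp add: PfkPr PgkPr PkPr)
  have Qnn: "Q v \<ge> 0" for v
    unfolding Q_def Pfk_def Pgk_def Pk_def
    by (auto split: prod.splits intro!: divide_nonneg_nonneg mult_nonneg_nonneg sum_nonneg p_nonneg)
  have Qpos: "w \<in> S \<Longrightarrow> Q (h w) > 0" for w
    unfolding Qh using Pr_pos[of w "\<lambda>w. (f w, k w)"] Pr_pos[of w "\<lambda>w. (g w, k w)"] Pr_pos[of w k]
    by simp
  have fA: "finite (f ` S)" "finite (g ` S)" "finite (k ` S)" using fin by auto
  have "sum Q (h ` S) \<le> sum Q (f ` S \<times> (g ` S \<times> k ` S))"
    by (rule sum_mono2) (use fA Qnn in \<open>auto simp: h_def\<close>)
  also have "\<dots> = (\<Sum>a\<in>f ` S. \<Sum>b\<in>g ` S. \<Sum>e\<in>k ` S. Q (a,b,e))"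
    by (simp add: sum.cartesian_product)
  also have "\<dots> = (\<Sum>e\<in>k ` S. \<Sum>a\<in>f ` S. \<Sum>b\<in>g ` S. Q (a,b,e))"
    by (subst sum.swap) (rule sum.cong[OF refl], rule sum.swap)
  also have "\<dots> = (\<Sum>e\<in>k ` S. (\<Sum>a\<in>f ` S. Pfk a e) * (\<Sum>b\<in>g ` S. Pgk b e) / Pk e)"
    by (rule sum.cong[OF refl]) (simp only: Q_def prod.case sum_product sum_divide_distrib)
  also have "\<dots> = (\<Sum>e\<in>k ` S. Pk e * Pk e / Pk e)"
  proof (rule sum.cong[OF refl])
    fix e
    have T: "{w\<in>S. k w = e} \<subseteq> S" by auto
    have e1: "Pfk a e = sum p {w\<in>{w\<in>S. k w = e}. f w = a}" for a
      unfolding Pfk_def by (rule sum.cong) auto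
    have e2: "Pgk a e = sum p {w\<in>{w\<in>S. k w = e}. g w = a}" for a
      unfolding Pgk_def by (rule sum.cong) auto
    have 1: "(\<Sum>a\<in>f ` S. Pfk a e) = Pk e"
      unfolding e1 Pk_def by (rule sum_p_group) (use fA T in auto)
    have 2: "(\<Sum>b\<in>g ` S. Pgk b e) = Pk e"
      unfolding e2 Pk_def by (rule sum_p_group) (use fA T in auto)
    show "(\<Sum>a\<in>f ` S. Pfk a e) * (\<Sum>b\<in>g ` S. Pgk b e) / Pk e = Pk e * Pk e / Pk e"
      by (simp add: 1 2)
  qed
  also have "\<dots> = (\<Sum>e\<in>k ` S. Pk e)"
    by (rule sum.cong[OF refl]) simp
  also have "\<dots> = 1"
    using sum_p_group[of k S "k ` S", OF _ fA(3)] tot unfolding Pk_def by simp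
  finally have Qsum: "sum Q (h ` S) \<le> 1" .
  have G: "(\<Sum>w\<in>S. p w * ln (Q (h w) / Pr h w)) \<le> 0"
    by (rule gibbs[OF Qpos Qsum])
  have pt: "p w * ln (Q (h w) / Pr h w) =
      p w * - ln (Pr h w) + p w * - ln (Pr k w) - p w * - ln (Pr (\<lambda>w. (f w, k w)) w)
      - p w * - ln (Pr (\<lambda>w. (g w, k w)) w)" if w: "w \<in> S" for w
  proof -
    have e: "ln (Q (h w) / Pr h w) = ln (Pr (\<lambda>w. (f w, k w)) w) + ln (Pr (\<lambda>w. (g w, k w)) w)
        - ln (Pr k w) - ln (Pr h w)"
      unfolding Qh using Pr_pos[OF w, of "\<lambda>w. (f w, k w)"] Pr_pos[OF w, of "\<lambda>w. (g w, k w)"]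
        Pr_pos[OF w, of k] Pr_pos[OF w, of h]
      by (simp add: ln_div ln_mult)
    show ?thesis unfolding e by (simp add: algebra_simps)
  qed
  have "(\<Sum>w\<in>S. p w * ln (Q (h w) / Pr h w)) =
      H h + H k - H (\<lambda>w. (f w, k w)) - H (\<lambda>w. (g w, k w))"
    unfolding H_def by (simp add: pt sum_subtractf sum.distrib sum_negf)
  thus ?thesis using G unfolding h_def by linarith
qed

lemma bound:
  fixes K :: nat and f :: "'w \<Rightarrow> 'x"
  assumes fN: "\<And>w. w \<in> S \<Longrightarrow> f w \<in> N (g w)" and finN: "\<And>y. finite (N y)"
    and cardN: "\<And>y. card (N y) \<le> K" and Kpos: "K > 0"
  shows "H (\<lambda>w. (f w, g w)) \<le> H g + ln (real K)"
proof -
  define Pg where "Pg b = sum p {w\<in>S. g w = b}" for b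
  define Q where "Q = (\<lambda>(a::'x,b). Pg b / real K)"
  define h where "h = (\<lambda>w. (f w, g w))"
  have PgPr: "Pg (g w) = Pr g w" for w unfolding Pg_def Pr_def by simp
  have Qh: "Q (h w) = Pr g w / real K" for w unfolding Q_def h_def by (simp add: PgPr)
  have Qnn: "Q v \<ge> 0" for v
    unfolding Q_def Pg_def
    by (auto split: prod.splits intro!: divide_nonneg_nonneg sum_nonneg p_nonneg)
  have Qpos: "w \<in> S \<Longrightarrow> Q (h w) > 0" for w
    unfolding Qh using Pr_pos[of w g] Kpos by simp
  have fB: "finite (g ` S)" using fin by auto
  have fSig: "finite (Sigma (g ` S) N)" using fB finN by auto
  have sub: "h ` S \<subseteq> (\<lambda>(b,a). (a,b)) ` Sigma (g ` S) N"
    using fN unfolding h_def by force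
  have "sum Q (h ` S) \<le> sum Q ((\<lambda>(b,a). (a,b)) ` Sigma (g ` S) N)"
    by (rule sum_mono2) (use fSig sub Qnn in auto)
  also have "\<dots> = (\<Sum>(b,a)\<in>Sigma (g ` S) N. Q (a,b))"
    by (subst sum.reindex) (auto simp: inj_on_def case_prod_unfold)
  also have "\<dots> = (\<Sum>b\<in>g ` S. \<Sum>a\<in>N b. Q (a,b))"
    by (rule sum.Sigma[symmetric]) (use fB finN in auto)
  also have "\<dots> = (\<Sum>b\<in>g ` S. real (card (N b)) * (Pg b / real K))"
    by (simp add: Q_def)
  also have "\<dots> \<le> (\<Sum>b\<in>g ` S. Pg b)"
  proof (rule sum_mono)
    fix b
    have "Pg b \<ge> 0" unfolding Pg_def by (intro sum_nonneg p_nonneg) auto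
    moreover have "real (card (N b)) \<le> real K" using cardN[of b] by simp
    ultimately have "real (card (N b)) * (Pg b / real K) \<le> real K * (Pg b / real K)"
      by (intro mult_right_mono) (auto intro: divide_nonneg_nonneg)
    thus "real (card (N b)) * (Pg b / real K) \<le> Pg b" using Kpos by simp
  qed
  also have "\<dots> = 1"
    using sum_p_group[of g S "g ` S", OF _ fB] tot unfolding Pg_def by simp
  finally have Qsum: "sum Q (h ` S) \<le> 1" .
  have G: "(\<Sum>w\<in>S. p w * ln (Q (h w) / Pr h w)) \<le> 0"
    by (rule gibbs[OF Qpos Qsum])
  have pt: "p w * ln (Q (h w) / Pr h w) = p w * - ln (Pr h w) - p w * - ln (Pr g w) - p w * ln (real K)"
    if w: "w \<in> S" for w
  proof -
    have e: "ln (Q (h w) / Pr h w) = ln (Pr g w) - ln (real K) - ln (Pr h w)"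
      unfolding Qh using Pr_pos[OF w, of g] Pr_pos[OF w, of h] Kpos
      by (simp add: ln_div ln_mult)
    show ?thesis unfolding e by (simp add: algebra_simps)
  qed
  have "(\<Sum>w\<in>S. p w * ln (Q (h w) / Pr h w)) = H h - H g - ln (real K)"
    unfolding H_def by (simp add: pt sum_subtractf sum.distrib sum_negf flip: sum_distrib_right) (simp add: tot)
  thus ?thesis using G unfolding h_def by linarith
qed

lemma mi_nonneg: "H (\<lambda>w. (f w, g w)) \<le> H f + H g"
proof -
  have "H (\<lambda>w. (f w, g w, undefined::unit)) + H (\<lambda>_. undefined::unit) \<le>
        H (\<lambda>w. (f w, undefined::unit)) + H (\<lambda>w. (g w, undefined::unit))"
    by (rule submod)
  moreover have "H (\<lambda>w. (f w, g w, undefined::unit)) = H (\<lambda>w. (f w, g w))" by (rule H_cong) auto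
  moreover have "H (\<lambda>w. (f w, undefined::unit)) = H f" by (rule H_cong) auto
  moreover have "H (\<lambda>w. (g w, undefined::unit)) = H g" by (rule H_cong) auto
  moreover have "H (\<lambda>_. undefined::unit) = 0" by (rule H_const)
  ultimately show ?thesis by linarith
qed

lemma indep:
  assumes "\<And>w. w \<in> S \<Longrightarrow> Pr (\<lambda>w. (f w, g w)) w = Pr f w * Pr g w"
  shows "H (\<lambda>w. (f w, g w)) = H f + H g"
  unfolding H_def
proof (subst sum.distrib[symmetric], rule sum.cong[OF refl])
  fix w assume w: "w \<in> S"
  show "p w * - ln (Pr (\<lambda>w. (f w, g w)) w) = p w * - ln (Pr f w) + p w * - ln (Pr g w)"
    using assms[OF w] Pr_pos[OF w, of f] Pr_pos[OF w, of g] by (simp add: ln_mult algebra_simps)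
qed

end

lemma pmf_map_fin:
  assumes "finite (set_pmf c)"
  shows "pmf (map_pmf f c) v = sum (pmf c) {w\<in>set_pmf c. f w = v}"
proof -
  have "pmf (map_pmf f c) v = measure c (f -` {v} \<inter> set_pmf c)"
    by (simp add: pmf_map measure_Int_set_pmf)
  also have "\<dots> = sum (pmf c) (f -` {v} \<inter> set_pmf c)"
    by (rule measure_measure_pmf_finite) (use assms in auto)
  also have "f -` {v} \<inter> set_pmf c = {w\<in>set_pmf c. f w = v}" by auto
  finally show ?thesis .
qed

lemma fdist_pmf:
  assumes "finite (set_pmf c)"
  shows "fdist (set_pmf c) (pmf c)"
proof
  show "finite (set_pmf c)" by fact
  show "\<And>w. w \<in> set_pmf c \<Longrightarrow> 0 < pmf c w" by (simp add: pmf_positive)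
  show "sum (pmf c) (set_pmf c) = 1" by (rule sum_pmf_eq_1) (use assms in auto)
qed

lemma kl_nonneg:
  assumes "q \<ge> 0" "t \<ge> 0" "q > 0 \<Longrightarrow> t > 0"
  shows "kl_term q t \<ge> 0"
proof (cases "q = 0")
  case True thus ?thesis using assms by (simp add: kl_term_def)
next
  case False
  hence q: "q > 0" using assms by simp
  hence t: "t > 0" using assms by simp
  have "ln (t / q) \<le> t / q - 1" by (rule ln_le_minus_one) (use q t in simp)
  hence "q * ln (t / q) \<le> q * (t / q - 1)" using q by (intro mult_left_mono) auto
  also have "\<dots> = t - q" using q by (simp add: field_simps)
  finally have "q * ln (t / q) \<le> t - q" .
  moreover have "ln (q / t) = - ln (t / q)" using q t by (simp add: ln_div)
  ultimately show ?thesis using False by (simp add: kl_term_def)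
qed

lemma MI_link:
  assumes fin: "finite (set_pmf c)"
  shows "mutual_info_pmf (map_pmf (\<lambda>w. (f w, g w)) c) =
    ennreal (fdist.H (set_pmf c) (pmf c) f + fdist.H (set_pmf c) (pmf c) g
       - fdist.H (set_pmf c) (pmf c) (\<lambda>w. (f w, g w)))"
proof -
  interpret fdist "set_pmf c" "pmf c" by (rule fdist_pmf[OF fin])
  define P where "P = map_pmf (\<lambda>w. (f w, g w)) c"
  define h where "h = (\<lambda>w. (f w, g w))"
  have m1: "map_pmf fst P = map_pmf f c" unfolding P_def by (simp add: map_pmf_comp)
  have m2: "map_pmf snd P = map_pmf g c" unfolding P_def by (simp add: map_pmf_comp)
  define A where "A = f ` set_pmf c"
  define B where "B = g ` set_pmf c"
  have fAB: "finite (A \<times> B)" unfolding A_def B_def using fin by auto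
  define q where "q z = pmf P z" for z
  define t where "t z = pmf (map_pmf f c) (fst z) * pmf (map_pmf g c) (snd z)" for z
  have qz: "q z = sum (pmf c) {w\<in>set_pmf c. h w = z}" for z
    unfolding q_def P_def h_def by (rule pmf_map_fin[OF fin])
  have af: "pmf (map_pmf f c) a = sum (pmf c) {w\<in>set_pmf c. f w = a}" for a
    by (rule pmf_map_fin[OF fin])
  have bg: "pmf (map_pmf g c) b = sum (pmf c) {w\<in>set_pmf c. g w = b}" for b
    by (rule pmf_map_fin[OF fin])
  have q0: "q z = 0" if "z \<notin> h ` set_pmf c" for z
  proof -
    have e: "{w\<in>set_pmf c. h w = z} = {}" using that by auto
    show ?thesis unfolding qz e by simp
  qed
  have t0: "t z = 0" if "z \<notin> A \<times> B" for z
  proof -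
    have "{w\<in>set_pmf c. f w = fst z} = {} \<or> {w\<in>set_pmf c. g w = snd z} = {}"
      using that unfolding A_def B_def by (cases z) auto
    thus ?thesis unfolding t_def af bg by (elim disjE) (simp_all only: sum.empty mult_zero_left mult_zero_right)
  qed
  have hAB: "h ` set_pmf c \<subseteq> A \<times> B" unfolding h_def A_def B_def by auto
  have qnn: "q z \<ge> 0" for z unfolding q_def by simp
  have tnn: "t z \<ge> 0" for z unfolding t_def by simp
  have qt: "q z > 0 \<Longrightarrow> t z > 0" for z
  proof -
    assume "q z > 0"
    hence "z \<in> h ` set_pmf c" using q0[of z] by (cases "z \<in> h ` set_pmf c") auto
    then obtain w where w: "w \<in> set_pmf c" "z = h w" by auto
    show "t z > 0" unfolding t_def af bg w(2) h_def
      using Pr_pos[OF w(1), of f] Pr_pos[OF w(1), of g] unfolding Pr_def by simp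
  qed
  have "mutual_info_pmf P = (\<integral>\<^sup>+ z. ennreal (kl_term (q z) (t z)) \<partial>count_space UNIV)"
    unfolding mutual_info_pmf_def q_def t_def m1 m2 by simp
  also have "\<dots> = (\<Sum>z\<in>A \<times> B. ennreal (kl_term (q z) (t z)))"
  proof (rule nn_integral_count_space'[OF fAB])
    fix z assume "z \<notin> A \<times> B"
    hence "z \<notin> h ` set_pmf c" using hAB by blast
    hence "q z = 0" by (rule q0)
    moreover have "t z = 0" by (rule t0) fact
    ultimately
    show "ennreal (kl_term (q z) (t z)) = 0" by (simp add: kl_term_def)
  qed simp
  also have "\<dots> = ennreal (\<Sum>z\<in>A \<times> B. kl_term (q z) (t z))"
    by (rule sum_ennreal) (use kl_nonneg qnn tnn qt in blast)
  also have "(\<Sum>z\<in>A \<times> B. kl_term (q z) (t z)) =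
     (\<Sum>z\<in>A \<times> B. (if q z = 0 then 0 else q z * ln (q z / t z)) - q z + t z)"
    by (rule sum.cong[OF refl]) (simp add: kl_term_def)
  also have "\<dots> = (\<Sum>z\<in>A \<times> B. (if q z = 0 then 0 else q z * ln (q z / t z)))
      - (\<Sum>z\<in>A \<times> B. q z) + (\<Sum>z\<in>A \<times> B. t z)"
    by (simp add: sum.distrib sum_subtractf)
  also have "(\<Sum>z\<in>A \<times> B. q z) = 1"
    unfolding qz using sum_p_group[of h "set_pmf c" "A \<times> B", OF hAB fAB] tot by simp
  also have "(\<Sum>z\<in>A \<times> B. t z) = (\<Sum>a\<in>A. pmf (map_pmf f c) a) * (\<Sum>b\<in>B. pmf (map_pmf g c) b)"
    unfolding t_def by (simp add: sum_product sum.cartesian_product case_prod_unfold)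
  also have "(\<Sum>a\<in>A. pmf (map_pmf f c) a) = 1"
    unfolding af A_def using sum_p_group[of f "set_pmf c" "f ` set_pmf c"] fin tot by simp
  also have "(\<Sum>b\<in>B. pmf (map_pmf g c) b) = 1"
    unfolding bg B_def using sum_p_group[of g "set_pmf c" "g ` set_pmf c"] fin tot by simp
  also have "(\<Sum>z\<in>A \<times> B. (if q z = 0 then 0 else q z * ln (q z / t z))) =
       (\<Sum>z\<in>h ` set_pmf c. q z * ln (q z / t z))"
  proof (rule sum.mono_neutral_cong_right[OF fAB hAB])
    show "\<forall>z\<in>A \<times> B - h ` set_pmf c. (if q z = 0 then 0 else q z * ln (q z / t z)) = 0"
      using q0 by auto
    show "\<And>z. z \<in> h ` set_pmf c \<Longrightarrow> (if q z = 0 then 0 else q z * ln (q z / t z)) = q z * ln (q z / t z)"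
      by simp
  qed
  also have "\<dots> = (\<Sum>w\<in>set_pmf c. pmf c w * ln (q (h w) / t (h w)))"
    unfolding qz by (rule regroup[of "\<lambda>z. ln (sum (pmf c) {w\<in>set_pmf c. h w = z} / t z)" h, symmetric])
  also have "\<dots> = (\<Sum>w\<in>set_pmf c. pmf c w * - ln (Pr f w) + pmf c w * - ln (Pr g w)
                       - pmf c w * - ln (Pr h w))"
  proof (rule sum.cong[OF refl])
    fix w assume w: "w \<in> set_pmf c"
    have e1: "q (h w) = Pr h w" unfolding qz Pr_def by simp
    have e2: "t (h w) = Pr f w * Pr g w" unfolding t_def af bg Pr_def h_def by simp
    have e: "ln (q (h w) / t (h w)) = ln (Pr h w) - ln (Pr f w) - ln (Pr g w)"
      unfolding e1 e2 using Pr_pos[OF w, of f] Pr_pos[OF w, of g] Pr_pos[OF w, of h]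
      by (simp add: ln_div ln_mult)
    show "pmf c w * ln (q (h w) / t (h w)) =
        pmf c w * - ln (Pr f w) + pmf c w * - ln (Pr g w) - pmf c w * - ln (Pr h w)"
      unfolding e by (simp add: algebra_simps)
  qed
  also have "\<dots> = H f + H g - H h"
    unfolding H_def by (simp add: sum.distrib sum_subtractf sum_negf)
  finally show ?thesis unfolding P_def h_def by simp
qed


lemma replicate_pmf_Suc_pair:
  "replicate_pmf (Suc n) p = map_pmf (\<lambda>(x,xs). x#xs) (pair_pmf p (replicate_pmf n p))"
  by (simp add: pair_pmf_def map_bind_pmf map_return_pmf)

lemma prob_pair_times:
  "measure_pmf.prob (pair_pmf M N) (A \<times> B) = measure_pmf.prob M A * measure_pmf.prob N B"
proof -
  have "measure_pmf.prob (pair_pmf M N) (A \<times> B) = measure_pmf.prob (pair_pmf M N) ((A \<times> B) \<inter> set_pmf (pair_pmf M N))"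
    by (rule measure_Int_set_pmf[symmetric])
  also have "(A \<times> B) \<inter> set_pmf (pair_pmf M N) = (A \<inter> set_pmf M) \<times> (B \<inter> set_pmf N)"
    by (auto simp: set_pair_pmf)
  also have "measure_pmf.prob (pair_pmf M N) \<dots> = measure_pmf.prob M (A \<inter> set_pmf M) * measure_pmf.prob N (B \<inter> set_pmf N)"
    by (rule measure_pmf_prob_product) (auto intro: countable_subset[OF _ countable_set_pmf])
  finally show ?thesis by (simp add: measure_Int_set_pmf)
qed

lemma cyl:
  assumes "J \<subseteq> {..<m}"
  shows "measure_pmf.prob (replicate_pmf m D) {xs. \<forall>j\<in>J. xs ! j = v j} = (\<Prod>j\<in>J. pmf D (v j))"
  using assms
proof (induction m arbitrary: J v)
  case 0
  hence "J = {}" by auto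
  thus ?case by simp
next
  case (Suc m)
  define J' where "J' = {j. Suc j \<in> J}"
  define A0 where "A0 = (if 0 \<in> J then {v 0} else UNIV)"
  have J': "J' \<subseteq> {..<m}" using Suc.prems unfolding J'_def by auto
  have pre: "(\<lambda>(x,xs). x#xs) -` {xs. \<forall>j\<in>J. xs ! j = v j} = A0 \<times> {xs. \<forall>j\<in>J'. xs ! j = v (Suc j)}"
  proof (intro set_eqI iffI)
    fix z assume z: "z \<in> (\<lambda>(x,xs). x#xs) -` {xs. \<forall>j\<in>J. xs ! j = v j}"
    obtain x xs where zz: "z = (x, xs)" by (cases z)
    have "\<forall>j\<in>J. (x#xs) ! j = v j" using z zz by simp
    hence "(0 \<in> J \<longrightarrow> x = v 0) \<and> (\<forall>j\<in>J'. xs ! j = v (Suc j))"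
      unfolding J'_def by (metis mem_Collect_eq nth_Cons_0 nth_Cons_Suc)
    thus "z \<in> A0 \<times> {xs. \<forall>j\<in>J'. xs ! j = v (Suc j)}" unfolding zz A0_def by auto
  next
    fix z assume z: "z \<in> A0 \<times> {xs. \<forall>j\<in>J'. xs ! j = v (Suc j)}"
    obtain x xs where zz: "z = (x, xs)" by (cases z)
    have h0: "0 \<in> J \<Longrightarrow> x = v 0" using z zz unfolding A0_def by auto
    have hs: "\<And>j. Suc j \<in> J \<Longrightarrow> xs ! j = v (Suc j)" using z zz unfolding J'_def by auto
    have "\<forall>j\<in>J. (x#xs) ! j = v j"
    proof
      fix j assume "j \<in> J"
      thus "(x#xs) ! j = v j" using h0 hs by (cases j) auto
    qed
    thus "z \<in> (\<lambda>(x,xs). x#xs) -` {xs. \<forall>j\<in>J. xs ! j = v j}" unfolding zz by simp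
  qed
  have "measure_pmf.prob (replicate_pmf (Suc m) D) {xs. \<forall>j\<in>J. xs ! j = v j}
      = measure_pmf.prob (pair_pmf D (replicate_pmf m D)) (A0 \<times> {xs. \<forall>j\<in>J'. xs ! j = v (Suc j)})"
    unfolding replicate_pmf_Suc_pair measure_map_pmf pre ..
  also have "\<dots> = measure_pmf.prob D A0 * (\<Prod>j\<in>J'. pmf D (v (Suc j)))"
    using Suc.IH[OF J', of "\<lambda>j. v (Suc j)"] by (simp add: prob_pair_times)
  also have "\<dots> = (\<Prod>j\<in>J. pmf D (v j))"
  proof -
    have fJ: "finite J" using Suc.prems finite_subset by blast
    have eq: "J - {0} = Suc ` J'" unfolding J'_def by (auto, metis not0_implies_Suc image_iff mem_Collect_eq)
    have "(\<Prod>j\<in>J - {0}. pmf D (v j)) = (\<Prod>j\<in>J'. pmf D (v (Suc j)))"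
      unfolding eq by (subst prod.reindex) auto
    moreover have "(\<Prod>j\<in>J. pmf D (v j)) = (if 0 \<in> J then pmf D (v 0) else 1) * (\<Prod>j\<in>J - {0}. pmf D (v j))"
      using fJ by (cases "0 \<in> J") (auto simp: prod.remove)
    ultimately show ?thesis unfolding A0_def by (simp add: measure_pmf_single)
  qed
  finally show ?case .
qed

definition NL :: "('b \<Rightarrow> 'b set) \<Rightarrow> 'b list \<Rightarrow> 'b list set" where
  "NL N ys = {zs. length zs = length ys \<and> (\<forall>k<length ys. zs ! k \<in> N (ys ! k))}"

lemma NL_Cons: "NL N (y#ys) = (\<lambda>(a,zs). a#zs) ` (N y \<times> NL N ys)"
proof (intro set_eqI iffI)
  fix zs assume "zs \<in> NL N (y#ys)"
  then obtain a zs' where zs: "zs = a#zs'" "length zs' = length ys"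
    and h: "\<forall>k<Suc (length ys). zs ! k \<in> N ((y#ys) ! k)"
    unfolding NL_def by (auto simp: length_Suc_conv)
  have "a \<in> N y" using h[rule_format, of 0] zs by simp
  moreover have "zs' \<in> NL N ys" unfolding NL_def using zs h by auto
  ultimately show "zs \<in> (\<lambda>(a,zs). a#zs) ` (N y \<times> NL N ys)" using zs by auto
next
  fix zs assume "zs \<in> (\<lambda>(a,zs). a#zs) ` (N y \<times> NL N ys)"
  then obtain a zs' where zs: "zs = a#zs'" "a \<in> N y" "zs' \<in> NL N ys" by auto
  show "zs \<in> NL N (y#ys)" unfolding NL_def using zs unfolding NL_def
    by (auto simp: nth_Cons split: nat.splits)
qed

lemma NL_fin_card:
  assumes "\<And>x. finite (N x)" "\<And>x. card (N x) \<le> d"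
  shows "finite (NL N ys) \<and> card (NL N ys) \<le> d ^ length ys"
proof (induction ys)
  case Nil
  have "NL N [] = {[]}" unfolding NL_def by auto
  thus ?case by simp
next
  case (Cons y ys)
  have f: "finite (N y \<times> NL N ys)" using Cons assms by auto
  have "card (NL N (y#ys)) \<le> card (N y \<times> NL N ys)"
    unfolding NL_Cons by (rule card_image_le[OF f])
  also have "\<dots> = card (N y) * card (NL N ys)" by (simp add: card_cartesian_product)
  also have "\<dots> \<le> d * d ^ length ys" using Cons assms by (intro mult_mono) auto
  finally show ?case using f unfolding NL_Cons by simp
qed


lemma Pr_meas:
  assumes "finite (set_pmf c)"
  shows "fdist.Pr (set_pmf c) (pmf c) f w = measure_pmf.prob c {w'. f w' = f w}"
proof -
  have "fdist.Pr (set_pmf c) (pmf c) f w = pmf (map_pmf f c) (f w)"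
    unfolding fdist.Pr_def[OF fdist_pmf[OF assms]] pmf_map_fin[OF assms] ..
  also have "\<dots> = measure_pmf.prob c {w'. f w' = f w}" by (simp add: pmf_map vimage_def)
  finally show ?thesis .
qed

lemma finite_main:
  fixes c :: "('b list \<times> 'b list) pmf" and N :: "'b \<Rightarrow> 'b set" and D :: "'b pmf"
  assumes fin: "finite (set_pmf c)"
    and msnd: "map_pmf snd c = replicate_pmf m D"
    and nb: "\<And>w j. w \<in> set_pmf c \<Longrightarrow> j < m \<Longrightarrow> fst w ! j \<in> N (snd w ! j)"
    and finN: "\<And>x. finite (N x)" and cardN: "\<And>x. card (N x) \<le> d" and d: "d \<ge> 1"
    and B: "B \<subseteq> {..<m}"
  shows "(\<Sum>i\<in>{..<m} - B. MI_coord_block (map_pmf fst c) i B) \<le> ennreal (real m * ln (real d))"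
proof -
  interpret fdist "set_pmf c" "pmf c" by (rule fdist_pmf[OF fin])
  define bs where "bs = sorted_list_of_set B"
  have fB: "finite B" using B finite_subset by blast
  have setbs: "set bs = B" unfolding bs_def using fB by simp
  have lenbs: "length bs = card B" unfolding bs_def by simp
  define Xp where "Xp i w = fst w ! i" for i and w :: "'b list \<times> 'b list"
  define X where "X i w = snd w ! i" for i and w :: "'b list \<times> 'b list"
  define Yp where "Yp w = map (\<lambda>b. fst w ! b) bs" for w :: "'b list \<times> 'b list"
  define Y where "Y w = map (\<lambda>b. snd w ! b) bs" for w :: "'b list \<times> 'b list"
  define V where "V J w = restrict (\<lambda>j. snd w ! j) J" for J and w :: "'b list \<times> 'b list"
  define Z where "Z w = (Yp w, Y w)" for w
  define C where "C = {..<m} - B"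
  have VE: "V J w' = V J w \<longleftrightarrow> (\<forall>j\<in>J. snd w' ! j = snd w ! j)" for J w w'
    unfolding V_def restrict_def fun_eq_iff by auto
  have YE: "Y w' = Y w \<longleftrightarrow> (\<forall>j\<in>B. snd w' ! j = snd w ! j)" for w w'
    unfolding Y_def map_eq_conv setbs ..
  have PrV: "Pr (V J) w = (\<Prod>j\<in>J. pmf D (snd w ! j))" if "J \<subseteq> {..<m}" for J w
  proof -
    have "Pr (V J) w = measure_pmf.prob c {w'. V J w' = V J w}" by (rule Pr_meas[OF fin])
    also have "{w'. V J w' = V J w} = snd -` {xs. \<forall>j\<in>J. xs ! j = snd w ! j}" using VE by auto
    also have "measure_pmf.prob c \<dots> = measure_pmf.prob (map_pmf snd c) {xs. \<forall>j\<in>J. xs ! j = snd w ! j}"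
      by (simp add: measure_map_pmf)
    also have "\<dots> = (\<Prod>j\<in>J. pmf D (snd w ! j))" unfolding msnd by (rule cyl[OF that])
    finally show ?thesis .
  qed
  have indV: "H (\<lambda>w. (V J1 w, V J2 w)) = H (V J1) + H (V J2)"
    if "J1 \<subseteq> {..<m}" "J2 \<subseteq> {..<m}" "J1 \<inter> J2 = {}" for J1 J2
  proof (rule indep)
    fix w
    have "Pr (\<lambda>w. (V J1 w, V J2 w)) w = Pr (V (J1 \<union> J2)) w"
      by (rule Pr_cong) (auto simp: VE)
    also have "\<dots> = (\<Prod>j\<in>J1 \<union> J2. pmf D (snd w ! j))" using that by (intro PrV) auto
    also have "\<dots> = (\<Prod>j\<in>J1. pmf D (snd w ! j)) * (\<Prod>j\<in>J2. pmf D (snd w ! j))"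
      by (rule prod.union_disjoint) (use that in \<open>auto intro: finite_subset[of _ "{..<m}"]\<close>)
    also have "\<dots> = Pr (V J1) w * Pr (V J2) w" using that by (simp add: PrV)
    finally show "Pr (\<lambda>w. (V J1 w, V J2 w)) w = Pr (V J1) w * Pr (V J2) w" .
  qed
  have perI: "H (Xp i) + H Yp - H (\<lambda>w. (Xp i w, Yp w))
      \<le> ln (real d) + (H (X i) + H Z - H (\<lambda>w. (X i w, Z w)))" if i: "i < m" for i
  proof -
    have s1: "H (\<lambda>w. (X i w, Yp w, Xp i w)) + H (Xp i) \<le> H (\<lambda>w. (X i w, Xp i w)) + H (\<lambda>w. (Yp w, Xp i w))"
      by (rule submod)
    have s2: "H (\<lambda>w. (Y w, (Xp i w, X i w), Yp w)) + H Yp \<le> H (\<lambda>w. (Y w, Yp w)) + H (\<lambda>w. ((Xp i w, X i w), Yp w))"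
      by (rule submod)
    have s3: "H (\<lambda>w. (X i w, Z w)) \<le> H (\<lambda>w. (Y w, (Xp i w, X i w), Yp w))"
      by (rule H_mono) (auto simp: Z_def)
    have s4: "H (\<lambda>w. (Xp i w, X i w)) \<le> H (X i) + ln (real d)"
      by (rule bound[where N = N]) (use nb i finN cardN d in \<open>auto simp: Xp_def X_def\<close>)
    have c1: "H (\<lambda>w. (Xp i w, Yp w)) = H (\<lambda>w. (Yp w, Xp i w))" by (rule H_cong) auto
    have c2: "H (\<lambda>w. (X i w, Yp w, Xp i w)) = H (\<lambda>w. ((Xp i w, X i w), Yp w))" by (rule H_cong) auto
    have c3: "H (\<lambda>w. (X i w, Xp i w)) = H (\<lambda>w. (Xp i w, X i w))" by (rule H_cong) auto
    have c4: "H (\<lambda>w. (Y w, Yp w)) = H Z" by (rule H_cong) (auto simp: Z_def)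
    show ?thesis using s1 s2 s3 s4 c1 c2 c3 c4 by linarith
  qed
  have sup: "(\<Sum>i\<in>F. H (X i) + H Z - H (\<lambda>w. (X i w, Z w))) \<le> H (V F) + H Z - H (\<lambda>w. (V F w, Z w))"
    if "F \<subseteq> C" for F
  proof -
    have fC: "finite C" unfolding C_def by simp
    have "finite F" using that fC finite_subset by blast
    thus ?thesis using that
    proof (induction F rule: finite_induct)
      case empty
      have "H (V {}) = H (\<lambda>_. undefined)" by (rule H_cong) (auto simp: VE)
      hence "H (V {}) = 0" by (simp add: H_const)
      moreover have "H (\<lambda>w. (V {} w, Z w)) = H Z" by (rule H_cong) (auto simp: VE)
      ultimately show ?case by simp
    next
      case (insert a F)
      have aC: "a \<in> C" and FC: "F \<subseteq> C" using insert by auto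
      have am: "a < m" "F \<subseteq> {..<m}" using aC FC unfolding C_def by auto
      have i1: "H (V (insert a F)) = H (V F) + H (X a)"
      proof -
        have "H (V (insert a F)) = H (\<lambda>w. (V F w, V {a} w))" by (rule H_cong) (auto simp: VE)
        also have "\<dots> = H (V F) + H (V {a})" using am insert.hyps by (intro indV) auto
        also have "H (V {a}) = H (X a)" by (rule H_cong) (auto simp: VE X_def)
        finally show ?thesis .
      qed
      have s: "H (\<lambda>w. (V F w, X a w, Z w)) + H Z \<le> H (\<lambda>w. (V F w, Z w)) + H (\<lambda>w. (X a w, Z w))"
        by (rule submod)
      have c: "H (\<lambda>w. (V (insert a F) w, Z w)) = H (\<lambda>w. (V F w, X a w, Z w))"
        by (rule H_cong) (auto simp: VE X_def)
      have IH: "(\<Sum>i\<in>F. H (X i) + H Z - H (\<lambda>w. (X i w, Z w))) \<le> H (V F) + H Z - H (\<lambda>w. (V F w, Z w))"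
        using insert.IH FC by blast
      show ?case using insert.hyps IH i1 s c by simp
    qed
  qed
  have fin1: "H (V C) + H Z - H (\<lambda>w. (V C w, Z w)) \<le> real (card B) * ln (real d)"
  proof -
    have m1: "H (\<lambda>w. (V C w, V B w)) \<le> H (\<lambda>w. (V C w, Z w))"
      by (rule H_mono) (auto simp: Z_def YE VE)
    have i1: "H (\<lambda>w. (V C w, V B w)) = H (V C) + H (V B)"
      by (rule indV) (use B in \<open>auto simp: C_def\<close>)
    have c1: "H (V B) = H Y" by (rule H_cong) (auto simp: VE YE)
    have b1: "H (\<lambda>w. (Yp w, Y w)) \<le> H Y + ln (real (d ^ card B))"
    proof (rule bound[where N = "\<lambda>ys. if length ys = card B then NL N ys else {}"])
      fix w assume w: "w \<in> set_pmf c"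
      show "Yp w \<in> (if length (Y w) = card B then NL N (Y w) else {})" unfolding NL_def Yp_def Y_def
        using nb[OF w] B setbs lenbs by (auto simp: nth_mem subset_iff)
    next
      fix ys :: "'b list"
      have "finite (NL N ys) \<and> card (NL N ys) \<le> d ^ length ys" by (rule NL_fin_card) (use finN cardN in auto)
      thus "finite (if length ys = card B then NL N ys else {})" by simp
      show "card (if length ys = card B then NL N ys else {}) \<le> d ^ card B"
        using \<open>finite (NL N ys) \<and> card (NL N ys) \<le> d ^ length ys\<close> by auto
    next
      show "0 < d ^ card B" using d by simp
    qed
    have "ln (real (d ^ card B)) = real (card B) * ln (real d)" using d by (simp add: ln_realpow)
    thus ?thesis using m1 i1 c1 b1 unfolding Z_def by linarith
  qed
  have MIeq: "MI_coord_block (map_pmf fst c) i B = ennreal (H (Xp i) + H Yp - H (\<lambda>w. (Xp i w, Yp w)))" for i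
  proof -
    have "MI_coord_block (map_pmf fst c) i B = mutual_info_pmf (map_pmf (\<lambda>w. (Xp i w, Yp w)) c)"
      unfolding MI_coord_block_def map_pmf_comp Xp_def Yp_def bs_def ..
    also have "\<dots> = ennreal (H (Xp i) + H Yp - H (\<lambda>w. (Xp i w, Yp w)))" by (rule MI_link[OF fin])
    finally show ?thesis .
  qed
  have nn: "0 \<le> H (Xp i) + H Yp - H (\<lambda>w. (Xp i w, Yp w))" for i
    using mi_nonneg[of "Xp i" Yp] by simp
  have Cm: "C \<subseteq> {..<m}" unfolding C_def by auto
  have cardC: "real (card C) + real (card B) = real m"
  proof -
    have "card C = m - card B" unfolding C_def using B by (simp add: card_Diff_subset fB)
    moreover have "card B \<le> m" using card_mono[OF _ B] by simp
    ultimately show ?thesis by simp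
  qed
  have "(\<Sum>i\<in>C. H (Xp i) + H Yp - H (\<lambda>w. (Xp i w, Yp w)))
      \<le> (\<Sum>i\<in>C. ln (real d) + (H (X i) + H Z - H (\<lambda>w. (X i w, Z w))))"
    by (rule sum_mono) (use perI Cm in auto)
  also have "\<dots> = real (card C) * ln (real d) + (\<Sum>i\<in>C. H (X i) + H Z - H (\<lambda>w. (X i w, Z w)))"
    by (simp add: sum.distrib)
  also have "\<dots> \<le> real (card C) * ln (real d) + real (card B) * ln (real d)"
    using sup[OF order_refl] fin1 by simp
  also have "\<dots> = real m * ln (real d)" using cardC by (simp flip: distrib_right)
  finally have tot: "(\<Sum>i\<in>C. H (Xp i) + H Yp - H (\<lambda>w. (Xp i w, Yp w))) \<le> real m * ln (real d)" .
  have "(\<Sum>i\<in>{..<m} - B. MI_coord_block (map_pmf fst c) i B)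
     = ennreal (\<Sum>i\<in>C. H (Xp i) + H Yp - H (\<lambda>w. (Xp i w, Yp w)))"
    unfolding MIeq C_def by (rule sum_ennreal) (use nn in auto)
  also have "\<dots> \<le> ennreal (real m * ln (real d))" by (rule ennreal_leI[OF tot])
  finally show ?thesis .
qed



lemma map_replicate_pmf:
  "map_pmf (map f) (replicate_pmf m D) = replicate_pmf m (map_pmf f D)"
proof (induction m)
  case 0 thus ?case by simp
next
  case (Suc m)
  have "map_pmf (map f) (replicate_pmf (Suc m) D) =
        map_pmf (\<lambda>(x,xs). x#xs) (map_pmf (\<lambda>(a, b). (f a, map f b)) (pair_pmf D (replicate_pmf m D)))"
    unfolding replicate_pmf_Suc_pair map_pmf_comp by (simp add: case_prod_unfold)
  also have "\<dots> = replicate_pmf (Suc m) (map_pmf f D)"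
    unfolding map_pair Suc.IH replicate_pmf_Suc_pair ..
  finally show ?case .
qed

lemma kl_lower:
  assumes q: "q \<ge> 0" and t: "t > 0"
  shows "(sqrt q - sqrt t)^2 \<le> kl_term q t"
proof (cases "q = 0")
  case True thus ?thesis using t by (simp add: kl_term_def)
next
  case False
  hence q: "q > 0" using q by simp
  define u where "u = sqrt (t / q)"
  have u: "u > 0" unfolding u_def using q t by simp
  have lu: "ln (t / q) = 2 * ln u" unfolding u_def using q t by (simp add: ln_sqrt)
  have "ln u \<le> u - 1" by (rule ln_le_minus_one[OF u])
  hence "ln (t / q) \<le> 2 * (u - 1)" unfolding lu by simp
  hence "q * ln (t / q) \<le> q * (2 * (u - 1))" using q by (intro mult_left_mono) auto
  moreover have "q * u = sqrt q * sqrt t"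
  proof -
    have sq: "sqrt q > 0" using q by simp
    have "q * u = (sqrt q * sqrt q) * (sqrt t / sqrt q)" unfolding u_def using q
      by (simp add: real_sqrt_divide real_sqrt_mult_self)
    also have "\<dots> = sqrt q * sqrt t" using sq by (simp add: field_simps)
    finally show ?thesis .
  qed
  moreover have "ln (q / t) = - ln (t / q)" using q t by (simp add: ln_div)
  moreover have "(sqrt q - sqrt t)^2 = q - 2 * (sqrt q * sqrt t) + t"
    using q t by (simp add: power2_diff)
  ultimately show ?thesis using False by (simp add: kl_term_def algebra_simps)
qed

lemma kl_upper:
  assumes q: "q \<ge> 0" and t: "t > 0"
  shows "kl_term q t \<le> q^2 / t - 2 * q + t"
proof (cases "q = 0")
  case True thus ?thesis by (simp add: kl_term_def)
next
  case False
  hence q: "q > 0" using q by simp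
  have "ln (q / t) \<le> q / t - 1" by (rule ln_le_minus_one) (use q t in simp)
  hence "q * ln (q / t) \<le> q * (q / t - 1)" using q by (intro mult_left_mono) auto
  also have "\<dots> = q^2 / t - q" by (simp add: power2_eq_square field_simps)
  finally show ?thesis using False by (simp add: kl_term_def)
qed

lemma kl_tendsto:
  fixes qn tn :: "nat \<Rightarrow> real"
  assumes qn: "qn \<longlonglongrightarrow> q" and tn: "tn \<longlonglongrightarrow> t" and t: "t > 0"
    and qnn: "\<And>n. qn n \<ge> 0" and q: "q \<ge> 0"
  shows "(\<lambda>n. kl_term (qn n) (tn n)) \<longlonglongrightarrow> kl_term q t"
proof -
  have evt: "eventually (\<lambda>n. tn n > 0) sequentially" using order_tendstoD(1)[OF tn t] .
  show ?thesis
  proof (cases "q = 0")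
    case False
    hence qp: "q > 0" using q by simp
    have evq: "eventually (\<lambda>n. qn n > 0) sequentially" using order_tendstoD(1)[OF qn qp] .
    have lim: "(\<lambda>n. qn n * ln (qn n / tn n) - qn n + tn n) \<longlonglongrightarrow> q * ln (q / t) - q + t"
      using qp t by (intro tendsto_intros qn tn) auto
    have "eventually (\<lambda>n. qn n * ln (qn n / tn n) - qn n + tn n = kl_term (qn n) (tn n)) sequentially"
      using evq by eventually_elim (simp add: kl_term_def)
    from tendsto_cong[OF this] lim show ?thesis using False by (simp add: kl_term_def)
  next
    case True
    have l1: "(\<lambda>n. (sqrt (qn n) - sqrt (tn n))^2) \<longlonglongrightarrow> (sqrt q - sqrt t)^2"
      by (intro tendsto_intros qn tn)
    have l2: "(\<lambda>n. (qn n)^2 / tn n - 2 * qn n + tn n) \<longlonglongrightarrow> q^2 / t - 2 * q + t"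
      using t by (intro tendsto_intros qn tn) auto
    have e1: "(sqrt q - sqrt t)^2 = kl_term q t" using True t by (simp add: kl_term_def)
    have e2: "q^2 / t - 2 * q + t = kl_term q t" using True t by (simp add: kl_term_def)
    show ?thesis
    proof (rule tendsto_sandwich[OF _ _ l1[unfolded e1] l2[unfolded e2]])
      show "eventually (\<lambda>n. (sqrt (qn n) - sqrt (tn n))^2 \<le> kl_term (qn n) (tn n)) sequentially"
        using evt by eventually_elim (rule kl_lower[OF qnn])
      show "eventually (\<lambda>n. kl_term (qn n) (tn n) \<le> (qn n)^2 / tn n - 2 * qn n + tn n) sequentially"
        using evt by eventually_elim (rule kl_upper[OF qnn])
    qed
  qed
qed

lemma nn_int_finite_bound:
  fixes F :: "'z::countable \<Rightarrow> ennreal"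
  assumes "\<And>Z. finite Z \<Longrightarrow> sum F Z \<le> R"
  shows "(\<integral>\<^sup>+z. F z \<partial>count_space UNIV) \<le> R"
proof -
  define E where "E n = {z::'z. to_nat z \<le> n}" for n
  have fE: "finite (E n)" for n
  proof -
    have "E n = to_nat -` {..n}" unfolding E_def by auto
    thus ?thesis by (simp add: finite_vimageI)
  qed
  have inc: "incseq (\<lambda>n z. F z * indicator (E n) z)"
    unfolding incseq_def le_fun_def E_def by (auto simp: indicator_def)
  have sup: "F z = (SUP n. F z * indicator (E n) z)" for z
  proof (rule antisym)
    show "F z \<le> (SUP n. F z * indicator (E n) z)"
      by (rule SUP_upper2[of "to_nat z"]) (auto simp: E_def)
    show "(SUP n. F z * indicator (E n) z) \<le> F z"
      by (rule SUP_least) (auto simp: indicator_def)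
  qed
  have "(\<integral>\<^sup>+z. F z \<partial>count_space UNIV) = (\<integral>\<^sup>+z. (SUP n. F z * indicator (E n) z) \<partial>count_space UNIV)"
    by (subst sup) (rule refl)
  also have "\<dots> = (SUP n. \<integral>\<^sup>+z. F z * indicator (E n) z \<partial>count_space UNIV)"
    by (rule nn_integral_monotone_convergence_SUP[OF inc]) simp
  also have "\<dots> \<le> R"
  proof (rule SUP_least)
    fix n
    have "(\<integral>\<^sup>+z. F z * indicator (E n) z \<partial>count_space UNIV) = (\<Sum>z\<in>E n. F z * indicator (E n) z)"
      by (rule nn_integral_count_space'[OF fE]) auto
    also have "\<dots> = sum F (E n)" by simp
    also have "\<dots> \<le> R" by (rule assms[OF fE])
    finally show "(\<integral>\<^sup>+z. F z * indicator (E n) z \<partial>count_space UNIV) \<le> R" .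
  qed
  finally show ?thesis .
qed

lemma sum_le_nn_int:
  fixes F :: "'z \<Rightarrow> ennreal"
  assumes "finite A"
  shows "sum F A \<le> (\<integral>\<^sup>+z. F z \<partial>count_space UNIV)"
proof -
  have "(\<integral>\<^sup>+z. F z * indicator A z \<partial>count_space UNIV) = (\<Sum>z\<in>A. F z * indicator A z)"
    by (rule nn_integral_count_space'[OF assms]) auto
  hence "sum F A = (\<integral>\<^sup>+z. F z * indicator A z \<partial>count_space UNIV)" by simp
  also have "\<dots> \<le> (\<integral>\<^sup>+z. F z \<partial>count_space UNIV)"
    by (rule nn_integral_mono) (auto simp: indicator_def)
  finally show ?thesis .
qed

lemma conv_meas:
  fixes c :: "('a::countable list \<times> 'a list) pmf"
  assumes J: "finite J"
  shows "(\<lambda>n. measure_pmf.prob c (E \<inter> {w. \<forall>j\<in>J. to_nat (snd w ! j) \<le> n})) \<longlonglongrightarrow> measure_pmf.prob c E"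
proof -
  define A where "A n = E \<inter> {w. \<forall>j\<in>J. to_nat (snd w ! j) \<le> n}" for n
  have inc: "incseq A" unfolding incseq_def A_def by auto
  have U: "(\<Union>n. A n) = E"
  proof (intro set_eqI iffI)
    fix w assume "w \<in> E"
    hence "w \<in> A (Max (insert 0 ((\<lambda>j. to_nat (snd w ! j)) ` J)))"
      unfolding A_def using J by auto
    thus "w \<in> (\<Union>n. A n)" by blast
  qed (auto simp: A_def)
  have "(\<lambda>n. measure_pmf.prob c (A n)) \<longlonglongrightarrow> measure_pmf.prob c (\<Union>n. A n)"
    by (rule measure_pmf.finite_Lim_measure_incseq) (use inc in auto)
  hence "(\<lambda>n. measure_pmf.prob c (A n)) \<longlonglongrightarrow> measure_pmf.prob c E" by (simp only: U)
  thus ?thesis unfolding A_def .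
qed

lemma map_lift_eq:
  "(map (\<lambda>b. if P b then Some (f b) else None) bs = map Some ys) \<longleftrightarrow> (\<forall>b\<in>set bs. P b) \<and> map f bs = ys"
proof (induction bs arbitrary: ys)
  case Nil thus ?case by auto
next
  case (Cons b bs)
  thus ?case by (cases ys) auto
qed


definition gI :: "('x \<times> 'y) pmf \<Rightarrow> 'x \<times> 'y \<Rightarrow> ennreal" where
  "gI P z = ennreal (kl_term (pmf P z) (pmf (map_pmf fst P) (fst z) * pmf (map_pmf snd P) (snd z)))"

lemma MI_gI: "mutual_info_pmf P = (\<integral>\<^sup>+z. gI P z \<partial>count_space UNIV)"
  unfolding mutual_info_pmf_def gI_def ..

lemma approx_main:
  fixes c :: "('a::countable list \<times> 'a list) pmf" and N :: "'a \<Rightarrow> 'a set" and D :: "'a pmf"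
  assumes msnd: "map_pmf snd c = replicate_pmf m D"
    and nb: "\<And>w j. w \<in> set_pmf c \<Longrightarrow> j < m \<Longrightarrow> fst w ! j \<in> N (snd w ! j)"
    and finN: "\<And>x. finite (N x)" and cardN: "\<And>x. card (N x) \<le> d" and d: "d \<ge> 1"
    and B: "B \<subseteq> {..<m}"
  shows "(\<Sum>i\<in>{..<m} - B. MI_coord_block (map_pmf fst c) i B) \<le> ennreal (real m * ln (real d))"
proof -
  define R where "R = ennreal (real m * ln (real d))"
  define C where "C = {..<m} - B"
  define bs where "bs = sorted_list_of_set B"
  have fB: "finite B" using B finite_subset by blast
  have setbs: "set bs = B" unfolding bs_def using fB by simp
  define lift where "lift n w j = (if to_nat (snd w ! j) \<le> n then Some (fst w ! j) else None)"
    for n and w :: "'a list \<times> 'a list" and j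
  define \<phi> where "\<phi> n x = (if to_nat x \<le> n then Some x else None)" for n and x :: 'a
  define G where "G n w = (map (lift n w) [0..<m], map (\<phi> n) (snd w))" for n w
  define cn where "cn n = map_pmf (G n) c" for n
  define N' where "N' ox = (case ox of None \<Rightarrow> {None} | Some x \<Rightarrow> Some ` N x)" for ox
  have lenS: "length (snd w) = m" if "w \<in> set_pmf c" for w
  proof -
    have "snd w \<in> set_pmf (map_pmf snd c)" using that by simp
    thus ?thesis unfolding msnd set_replicate_pmf by simp
  qed
  have bound_n: "(\<Sum>i\<in>C. MI_coord_block (map_pmf fst (cn n)) i B) \<le> R" for n
  proof -
    define F where "F = {x::'a. to_nat x \<le> n}"
    have fF: "finite F"
    proof -
      have "F = to_nat -` {..n}" unfolding F_def by auto
      thus ?thesis by (simp add: finite_vimageI)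
    qed
    define U where "U = (\<Union>x\<in>F. N x)"
    have fU: "finite U" unfolding U_def using fF finN by auto
    define L1 where "L1 = {xs. set xs \<subseteq> insert None (Some ` U) \<and> length xs = m}"
    define L2 where "L2 = {xs. set xs \<subseteq> insert None (Some ` F) \<and> length xs = m}"
    have fL: "finite (L1 \<times> L2)" unfolding L1_def L2_def
      using fU fF by (intro finite_cartesian_product finite_lists_length_eq) auto
    have sub: "set_pmf (cn n) \<subseteq> L1 \<times> L2"
    proof
      fix w' assume "w' \<in> set_pmf (cn n)"
      then obtain w where w: "w \<in> set_pmf c" "w' = G n w" unfolding cn_def by auto
      have "fst w' \<in> L1"
      proof -
        have lj: "lift n w j \<in> insert None (Some ` U)" if "j < m" for j
          using nb[OF w(1) that] unfolding lift_def U_def F_def by auto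
        have "set (map (lift n w) [0..<m]) \<subseteq> insert None (Some ` U)"
        proof
          fix y assume "y \<in> set (map (lift n w) [0..<m])"
          then obtain j where "j < m" "y = lift n w j" by auto
          thus "y \<in> insert None (Some ` U)" using lj by simp
        qed
        thus ?thesis unfolding L1_def w(2) G_def by simp
      qed
      moreover have "snd w' \<in> L2" unfolding L2_def w(2) G_def using lenS[OF w(1)]
        by (auto simp: \<phi>_def F_def)
      ultimately show "w' \<in> L1 \<times> L2" by (cases w') auto
    qed
    have fin: "finite (set_pmf (cn n))" using finite_subset[OF sub fL] .
    have msnd_n: "map_pmf snd (cn n) = replicate_pmf m (map_pmf (\<phi> n) D)"
    proof -
      have "map_pmf snd (cn n) = map_pmf (map (\<phi> n)) (map_pmf snd c)"
        unfolding cn_def map_pmf_comp G_def by simp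
      thus ?thesis unfolding msnd map_replicate_pmf .
    qed
    have nb_n: "fst w' ! j \<in> N' (snd w' ! j)" if hw: "w' \<in> set_pmf (cn n)" "j < m" for w' j
    proof -
      obtain w where w: "w \<in> set_pmf c" "w' = G n w" using hw(1) unfolding cn_def set_map_pmf by blast
      have "fst w' ! j = lift n w j" unfolding w(2) G_def using hw(2) by simp
      moreover have "snd w' ! j = \<phi> n (snd w ! j)" unfolding w(2) G_def using hw(2) lenS[OF w(1)] by simp
      ultimately show ?thesis using nb[OF w(1) hw(2)] unfolding lift_def \<phi>_def N'_def by auto
    qed
    have finN': "finite (N' ox)" for ox unfolding N'_def using finN by (cases ox) auto
    have cardN': "card (N' ox) \<le> d" for ox
      unfolding N'_def using cardN d by (cases ox) (auto simp: card_image)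
    have "(\<Sum>i\<in>{..<m} - B. MI_coord_block (map_pmf fst (cn n)) i B) \<le> ennreal (real m * ln (real d))"
      by (rule finite_main[OF fin msnd_n nb_n finN' cardN' d B])
    thus ?thesis unfolding R_def C_def .
  qed
  define P where "P i = map_pmf (\<lambda>w. (fst w ! i, map (\<lambda>b. fst w ! b) bs)) c" for i
  define Pn where "Pn n i = map_pmf (\<lambda>w. (lift n w i, map (lift n w) bs)) c" for n i
  have MIP: "MI_coord_block (map_pmf fst c) i B = mutual_info_pmf (P i)" for i
    unfolding MI_coord_block_def P_def map_pmf_comp bs_def ..
  have MIPn: "MI_coord_block (map_pmf fst (cn n)) i B = mutual_info_pmf (Pn n i)" if "i \<in> C" for n i
  proof -
    have im: "i < m" using that unfolding C_def by simp
    have bm: "\<forall>b\<in>set bs. b < m" using B setbs by auto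
    have "(\<lambda>w. (fst (G n w) ! i, map (\<lambda>b. fst (G n w) ! b) bs)) = (\<lambda>w. (lift n w i, map (lift n w) bs))"
      using im bm by (auto simp: G_def fun_eq_iff)
    thus ?thesis unfolding MI_coord_block_def Pn_def cn_def map_pmf_comp bs_def[symmetric] by simp
  qed
  define W where "W n J = {w::'a list \<times> 'a list. \<forall>j\<in>J. to_nat (snd w ! j) \<le> n}" for n J
  define \<psi> where "\<psi> z = (Some (fst z), map Some (snd z))" for z :: "'a \<times> 'a list"
  have inj\<psi>: "inj \<psi>" unfolding \<psi>_def inj_def by (auto simp: map_injective)
  have fC: "finite C" unfolding C_def by simp
  have Cm: "i \<in> C \<Longrightarrow> i < m" for i unfolding C_def by simp
  have conv: "(\<lambda>n. gI (Pn n i) (\<psi> z)) \<longlonglongrightarrow> gI (P i) z" if iC: "i \<in> C" and nz: "gI (P i) z \<noteq> 0" for i z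
  proof -
    obtain x ys where z: "z = (x, ys)" by (cases z)
    define Eq where "Eq = {w::'a list \<times> 'a list. (fst w ! i, map (\<lambda>b. fst w ! b) bs) = (x, ys)}"
    define Ea where "Ea = {w::'a list \<times> 'a list. fst w ! i = x}"
    define Eb where "Eb = {w::'a list \<times> 'a list. map (\<lambda>b. fst w ! b) bs = ys}"
    define q where "q = measure_pmf.prob c Eq"
    define a where "a = measure_pmf.prob c Ea"
    define b where "b = measure_pmf.prob c Eb"
    define qn where "qn n = measure_pmf.prob c (Eq \<inter> W n (insert i B))" for n
    define an where "an n = measure_pmf.prob c (Ea \<inter> W n {i})" for n
    define bn where "bn n = measure_pmf.prob c (Eb \<inter> W n B)" for n
    have gP: "gI (P i) z = ennreal (kl_term q (a * b))"
      unfolding gI_def P_def map_pmf_comp pmf_map z q_def a_def b_def Eq_def Ea_def Eb_def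
      by (simp add: vimage_def)
    have lift_eq1: "(lift n w i = Some x) \<longleftrightarrow> w \<in> Ea \<inter> W n {i}" for n w
      unfolding lift_def Ea_def W_def by auto
    have lift_eq2: "(map (lift n w) bs = map Some ys) \<longleftrightarrow> w \<in> Eb \<inter> W n B" for n w
      unfolding lift_def Eb_def W_def using map_lift_eq[of "\<lambda>b. to_nat (snd w ! b) \<le> n" "\<lambda>b. fst w ! b" bs ys]
      by (simp add: setbs conj_commute)
    have gPn: "gI (Pn n i) (\<psi> z) = ennreal (kl_term (qn n) (an n * bn n))" for n
    proof -
      have e1: "{w. lift n w i = Some x \<and> map (lift n w) bs = map Some ys} = Eq \<inter> W n (insert i B)"
        using lift_eq1[of n] lift_eq2[of n] unfolding Eq_def Ea_def Eb_def W_def by auto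
      have e2: "{w. lift n w i = Some x} = Ea \<inter> W n {i}" using lift_eq1 by auto
      have e3: "{w. map (lift n w) bs = map Some ys} = Eb \<inter> W n B" using lift_eq2 by auto
      show ?thesis
        unfolding gI_def Pn_def map_pmf_comp pmf_map z \<psi>_def qn_def an_def bn_def
        by (simp add: vimage_def e1 e2 e3)
    qed
    have fJ: "finite (insert i B)" "finite {i}" using fB by auto
    have cq: "qn \<longlonglongrightarrow> q" unfolding qn_def q_def W_def by (rule conv_meas[OF fJ(1)])
    have ca: "an \<longlonglongrightarrow> a" unfolding an_def a_def W_def by (rule conv_meas[OF fJ(2)])
    have cb: "bn \<longlonglongrightarrow> b" unfolding bn_def b_def W_def by (rule conv_meas[OF fB])
    have qa: "q \<le> a" unfolding q_def a_def by (rule measure_pmf.finite_measure_mono) (auto simp: Eq_def Ea_def)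
    have qb: "q \<le> b" unfolding q_def b_def by (rule measure_pmf.finite_measure_mono) (auto simp: Eq_def Eb_def)
    have tpos: "a * b > 0"
    proof (cases "q = 0")
      case True
      hence "kl_term q (a * b) = a * b" by (simp add: kl_term_def)
      hence "ennreal (a * b) \<noteq> 0" using nz unfolding gP by simp
      hence "a * b > 0" by (simp add: ennreal_eq_0_iff)
      thus ?thesis .
    next
      case False
      hence "q > 0" unfolding q_def by (simp add: zero_less_measure_iff)
      hence "a > 0" "b > 0" using qa qb by auto
      thus ?thesis by simp
    qed
    have "(\<lambda>n. kl_term (qn n) (an n * bn n)) \<longlonglongrightarrow> kl_term q (a * b)"
      by (rule kl_tendsto[OF cq tendsto_mult[OF ca cb] tpos]) (simp_all add: qn_def q_def)
    hence "(\<lambda>n. ennreal (kl_term (qn n) (an n * bn n))) \<longlonglongrightarrow> ennreal (kl_term q (a * b))"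
      by (rule tendsto_ennrealI)
    thus ?thesis unfolding gPn gP .
  qed
  have partial: "(\<Sum>z\<in>Z. \<Sum>i\<in>C. gI (P i) z) \<le> R" if fZ: "finite Z" for Z
  proof -
    define K where "K = {iz \<in> C \<times> Z. gI (P (fst iz)) (snd iz) \<noteq> 0}"
    have fK: "finite K" unfolding K_def using fC fZ by auto
    have KCZ: "K \<subseteq> C \<times> Z" unfolding K_def by auto
    have "(\<Sum>z\<in>Z. \<Sum>i\<in>C. gI (P i) z) = (\<Sum>iz\<in>C \<times> Z. gI (P (fst iz)) (snd iz))"
      by (subst sum.swap) (simp add: sum.cartesian_product case_prod_unfold)
    also have "\<dots> = (\<Sum>iz\<in>K. gI (P (fst iz)) (snd iz))"
      by (rule sum.mono_neutral_right) (use fC fZ KCZ in \<open>auto simp: K_def\<close>)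
    finally have eqK: "(\<Sum>z\<in>Z. \<Sum>i\<in>C. gI (P i) z) = (\<Sum>iz\<in>K. gI (P (fst iz)) (snd iz))" .
    have lim: "(\<lambda>n. \<Sum>iz\<in>K. gI (Pn n (fst iz)) (\<psi> (snd iz))) \<longlonglongrightarrow> (\<Sum>iz\<in>K. gI (P (fst iz)) (snd iz))"
      by (rule tendsto_sum) (use conv in \<open>auto simp: K_def\<close>)
    have le: "(\<Sum>iz\<in>K. gI (Pn n (fst iz)) (\<psi> (snd iz))) \<le> R" for n
    proof -
      have "(\<Sum>iz\<in>K. gI (Pn n (fst iz)) (\<psi> (snd iz))) \<le> (\<Sum>iz\<in>C \<times> Z. gI (Pn n (fst iz)) (\<psi> (snd iz)))"
        by (rule sum_mono2) (use fC fZ KCZ in auto)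
      also have "\<dots> = (\<Sum>i\<in>C. \<Sum>z\<in>Z. gI (Pn n i) (\<psi> z))"
        by (simp add: sum.cartesian_product case_prod_unfold)
      also have "\<dots> \<le> (\<Sum>i\<in>C. mutual_info_pmf (Pn n i))"
      proof (rule sum_mono)
        fix i
        have "(\<Sum>z\<in>Z. gI (Pn n i) (\<psi> z)) = (\<Sum>z'\<in>\<psi> ` Z. gI (Pn n i) z')"
          by (simp add: sum.reindex[OF inj_on_subset[OF inj\<psi> subset_UNIV]] o_def)
        also have "\<dots> \<le> (\<integral>\<^sup>+z. gI (Pn n i) z \<partial>count_space UNIV)"
          by (rule sum_le_nn_int) (use fZ in simp)
        finally show "(\<Sum>z\<in>Z. gI (Pn n i) (\<psi> z)) \<le> mutual_info_pmf (Pn n i)" unfolding MI_gI .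
      qed
      also have "\<dots> = (\<Sum>i\<in>C. MI_coord_block (map_pmf fst (cn n)) i B)"
        by (rule sum.cong[OF refl]) (simp add: MIPn)
      also have "\<dots> \<le> R" by (rule bound_n)
      finally show ?thesis .
    qed
    have "(\<Sum>iz\<in>K. gI (P (fst iz)) (snd iz)) \<le> R"
      by (rule tendsto_le[OF trivial_limit_sequentially tendsto_const lim]) (use le in simp)
    thus ?thesis unfolding eqK .
  qed
  have "(\<Sum>i\<in>C. MI_coord_block (map_pmf fst c) i B) = (\<Sum>i\<in>C. \<integral>\<^sup>+z. gI (P i) z \<partial>count_space UNIV)"
    by (simp add: MIP MI_gI)
  also have "\<dots> = (\<integral>\<^sup>+z. (\<Sum>i\<in>C. gI (P i) z) \<partial>count_space UNIV)"
    by (rule nn_integral_sum[symmetric]) simp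
  also have "\<dots> \<le> R" by (rule nn_int_finite_bound) (rule partial)
  finally show ?thesis unfolding R_def C_def .
qed



theorem mainTheorem9:
  fixes D :: "'a::countable pmf"
    and \<rho> :: "'a \<Rightarrow> 'a \<Rightarrow> ennreal"
    and m r d :: nat
    and \<mu> :: "'a list pmf"
  assumes "cost_function \<rho>"
    and "cost_degree \<rho> = enat d" and "d \<ge> 1"
    and "m \<ge> 1"
    and "\<mu> \<in> adaptive_class m \<rho> D"
    and "r < m"
  shows "(1 / of_nat m) * (\<Sum>i<m. (1 / of_nat ((m - 1) choose r)) *
            (\<Sum>B \<in> {B. B \<subseteq> {..<m} - {i} \<and> card B = r}. MI_coord_block \<mu> i B))
         \<le> ennreal (real m / real (m - r) * ln (real d))"
proof -
  note deg = assms(2) and d = assms(3) and m1 = assms(4) and rm = assms(6)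
  obtain c where c1: "map_pmf fst c = \<mu>" and c2: "map_pmf snd c = replicate_pmf m D"
    and c3: "\<forall>(S', S) \<in> set_pmf c. S' \<in> cost_ball \<rho> m S"
    using assms(5) unfolding adaptive_class_def by blast
  define N where "N x = {y. \<rho> x y \<noteq> \<top>}" for x
  have degx: "(if finite (N x) then enat (card (N x)) else \<infinity>) \<le> enat d" for x
  proof -
    have "(if finite (N x) then enat (card (N x)) else \<infinity>) \<le> cost_degree \<rho>"
      unfolding cost_degree_def N_def by (rule SUP_upper) simp
    thus ?thesis using deg by simp
  qed
  have finN: "finite (N x)" for x using degx[of x] by (cases "finite (N x)") auto
  have cardN: "card (N x) \<le> d" for x using degx[of x] finN[of x] by simp
  have nb: "fst w ! j \<in> N (snd w ! j)" if w: "w \<in> set_pmf c" and j: "j < m" for w j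
  proof (rule ccontr)
    assume "fst w ! j \<notin> N (snd w ! j)"
    hence top: "\<rho> (snd w ! j) (fst w ! j) = \<top>" unfolding N_def by simp
    have cb: "fst w \<in> cost_ball \<rho> m (snd w)" using c3 w by (cases w) auto
    have "\<rho> (snd w ! j) (fst w ! j) \<le> (\<Sum>i<m. \<rho> (snd w ! i) (fst w ! i))"
      by (rule member_le_sum) (use j in auto)
    hence stop: "(\<Sum>i<m. \<rho> (snd w ! i) (fst w ! i)) = \<top>" using top by (simp add: top_unique)
    have nz: "(1 / of_nat m :: ennreal) \<noteq> 0" by (simp add: ennreal_divide_eq_0_iff)
    have "(1 / of_nat m) * (\<Sum>i<m. \<rho> (snd w ! i) (fst w ! i)) = \<top>"
      unfolding stop using nz by (simp add: ennreal_mult_eq_top_iff)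
    moreover have "(1 / of_nat m) * (\<Sum>i<m. \<rho> (snd w ! i) (fst w ! i)) \<le> 1"
      using cb unfolding cost_ball_def by simp
    ultimately show False by (metis ennreal_one_neq_top top_unique)
  qed
  define Bs where "Bs = {B. B \<subseteq> {..<m} \<and> card B = r}"
  define MI where "MI i B = MI_coord_block \<mu> i B" for i B
  have fBs: "finite Bs" unfolding Bs_def by (rule finite_subset[of _ "Pow {..<m}"]) auto
  have perB: "(\<Sum>i\<in>{..<m} - B. MI i B) \<le> ennreal (real m * ln (real d))" if "B \<in> Bs" for B
    unfolding MI_def c1[symmetric]
    by (rule approx_main[OF c2 nb finN cardN d]) (use that in \<open>auto simp: Bs_def\<close>)
  have swap: "(\<Sum>i<m. \<Sum>B \<in> {B. B \<subseteq> {..<m} - {i} \<and> card B = r}. MI i B)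
      = (\<Sum>B\<in>Bs. \<Sum>i\<in>{..<m} - B. MI i B)"
  proof -
    have "(\<Sum>i<m. \<Sum>B \<in> {B. B \<subseteq> {..<m} - {i} \<and> card B = r}. MI i B)
        = (\<Sum>i\<in>{..<m}. \<Sum>B \<in> {B. B \<in> Bs \<and> i \<notin> B}. MI i B)"
      by (rule sum.cong[OF refl], rule sum.cong) (auto simp: Bs_def)
    also have "\<dots> = (\<Sum>B\<in>Bs. \<Sum>i \<in> {i. i \<in> {..<m} \<and> i \<notin> B}. MI i B)"
      by (rule sum.swap_restrict) (use fBs in auto)
    also have "\<dots> = (\<Sum>B\<in>Bs. \<Sum>i\<in>{..<m} - B. MI i B)"
      by (rule sum.cong[OF refl], rule sum.cong) auto
    finally show ?thesis .
  qed
  have cardBs: "card Bs = m choose r" unfolding Bs_def using n_subsets[of "{..<m}" r] by simp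
  define L where "L = real m * ln (real d)"
  have L0: "L \<ge> 0" unfolding L_def using d by simp
  have "(\<Sum>B\<in>Bs. \<Sum>i\<in>{..<m} - B. MI i B) \<le> (\<Sum>B\<in>Bs. ennreal L)"
    by (rule sum_mono) (use perB in \<open>simp add: L_def\<close>)
  also have "\<dots> = ennreal (real (m choose r) * L)"
    using cardBs L0 by (simp add: ennreal_mult ennreal_of_nat_eq_real_of_nat)
  finally have tot: "(\<Sum>i<m. \<Sum>B \<in> {B. B \<subseteq> {..<m} - {i} \<and> card B = r}. MI i B)
      \<le> ennreal (real (m choose r) * L)" unfolding swap .
  define C1 where "C1 = (m - 1) choose r"
  have C1pos: "C1 > 0" unfolding C1_def using rm by simp
  have mpos: "m > 0" using m1 by simp
  have e1: "(1 / of_nat m :: ennreal) = ennreal (1 / real m)"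
    using mpos by (simp add: ennreal_of_nat_eq_real_of_nat divide_ennreal[symmetric])
  have e2: "(1 / of_nat C1 :: ennreal) = ennreal (1 / real C1)"
    using C1pos by (simp add: ennreal_of_nat_eq_real_of_nat divide_ennreal[symmetric])
  have "(1 / of_nat m) * (\<Sum>i<m. (1 / of_nat C1) * (\<Sum>B \<in> {B. B \<subseteq> {..<m} - {i} \<and> card B = r}. MI i B))
      = ennreal (1 / real m) * (ennreal (1 / real C1) * (\<Sum>i<m. \<Sum>B \<in> {B. B \<subseteq> {..<m} - {i} \<and> card B = r}. MI i B))"
    unfolding e1 e2 by (simp add: sum_distrib_left)
  also have "\<dots> \<le> ennreal (1 / real m) * (ennreal (1 / real C1) * ennreal (real (m choose r) * L))"
    by (intro mult_left_mono tot) auto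
  also have "\<dots> = ennreal (1 / real m * (1 / real C1 * (real (m choose r) * L)))"
  proof -
    have a: "ennreal (1 / real C1) * ennreal (real (m choose r) * L) = ennreal (1 / real C1 * (real (m choose r) * L))"
      by (rule ennreal_mult[symmetric]) (use L0 in auto)
    have b: "ennreal (1 / real m) * ennreal (1 / real C1 * (real (m choose r) * L)) =
        ennreal (1 / real m * (1 / real C1 * (real (m choose r) * L)))"
      by (rule ennreal_mult[symmetric]) (use L0 in auto)
    show ?thesis unfolding a b ..
  qed
  also have "1 / real m * (1 / real C1 * (real (m choose r) * L)) = real m / real (m - r) * ln (real d)"
  proof -
    have "real (m - r) * real (m choose r) = real m * real C1"
      unfolding C1_def using binomial_absorb_comp[of m r] by (metis of_nat_mult)
    moreover have "real (m - r) > 0" using rm by simp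
    ultimately show ?thesis unfolding L_def using mpos C1pos
      by (simp add: field_simps)
  qed
  finally show ?thesis unfolding MI_def C1_def .
qed

end
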